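(* Let $q=p^e$ with $p$ prime and $e\ge 1$, and fix an integer $s$ with $0\le s<e$. Let $C_1$ and $C_2$ be linear codes over $\mathbb{F}_q$ with parameters $[n,k_1,d_1]_q$ and $[n,k_2,d_2]_q$ respectively, such that $C_2^{\perp_s}\subseteq C_1$. Then there exists a quantum code with parameters $[[n,k_1+k_2-n,d]]_q$, where $$d=\min\{w_H(c)\mid c\in (C_1\setminus (C_2^{p^{e-s}})^{\perp})\cup (C_2^{p^{e-s}}\setminus C_1^{\perp})\}\ \ge\ \min\{d_1,d_2\},$$ and this code is pure to $\min\{d_1,d_2\}$.
   Context: For $\mathbf{x},\mathbf{y}\in\mathbb{F}_q^n$ the $s$-Galois form is $[\mathbf{x},\mathbf{y}]_s=\sum_{i=1}^n x_iy_i^{p^s}$. For a code $C\subseteq\mathbb{F}_q^n$, its $s$-Galois dual is $C^{\perp_s}=\{\mathbf{x}\in\mathbb{F}_q^n: [\mathbf{c},\mathbf{x}]_s=0\ \forall \mathbf{c}\in C\}$; $C^{\perp}=C^{\perp_0}$ is the Euclidean dual. For a vector $\mathbf{a}=(a_1,\dots,a_n)$, $\mathbf{a}^{p^{e-s}}=(a_1^{p^{e-s}},\dots,a_n^{p^{e-s}})$, and $C^{p^{e-s}}=\{\mathbf{a}^{p^{e-s}}:\mathbf{a}\in C\}$. $w_H$ denotes Hamming weight. Quantum codes: let $V_n=(\mathbb{C}^q)^{\otimes n}$ with orthonormal basis $\{|\mathbf{c}\rangle:\mathbf{c}\in\mathbb{F}_q^n\}$. For $a,b\in\mathbb{F}_q$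 define $X(a)|x\rangle=|x+a\rangle$, $Z(b)|x\rangle=\omega^{\mathrm{tr}(bx)}|x\rangle$ with $\omega=e^{2\pi i/p}$ and $\mathrm{tr}:\mathbb{F}_q\to\mathbb{F}_p$ the trace; for $\mathbf{a},\mathbf{b}\in\mathbb{F}_q^n$ let $X(\mathbf{a})=\bigotimes_i X(a_i)$, $Z(\mathbf{b})=\bigotimes_i Z(b_i)$. The error group is $G_n=\{\omega^cX(\mathbf{a})Z(\mathbf{b}):\mathbf{a},\mathbf{b}\in\mathbb{F}_q^n, c\in\mathbb{F}_p\}$, and the weight of $\omega^cX(\mathbf{a})Z(\mathbf{b})$ is the number of $i$ with $(a_i,b_i)\ne(0,0)$. A quantum code with parameters $[[n,k,d]]_q$ is a subspace $Q\subseteq V_n$ of dimension $q^k$ with minimum distance $d$, i.e. for all $|u\rangle,|v\rangle\in Q$ with $\langle u|v\rangle=0$ and every $E\in G_n$ of weight at most $d-1$, $\langle u|E|v\rangle=0$ (and, if $k=0$, as is standard, $d$ is defined via purity: $\langle u|E|u\rangle=\langle u|u\rangle\cdot$const fails only for weight $\ge d$). $Q$ is pure to $t$ if $\langle u|E|v\rangle=0$ for all $|u\rangle,|v\rangle\in Q$ and all $E\in G_n$ of weight between $1$ and $t-1$. *)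

theory Defs
  imports Complex_Main "HOL-Computational_Algebra.Primes"
begin

definition lcomb :: "('x \<Rightarrow> 'k::field) set \<Rightarrow> (('x \<Rightarrow> 'k) \<Rightarrow> 'k) \<Rightarrow> ('x \<Rightarrow> 'k)" where
  "lcomb B c = (\<lambda>x. \<Sum>b\<in>B. c b * b x)"

definition has_dim :: "('x \<Rightarrow> 'k::field) set \<Rightarrow> nat \<Rightarrow> bool" where
  "has_dim V m \<longleftrightarrow> (\<exists>B. finite B \<and> card B = m \<and> B \<subseteq> V \<and>
      (\<forall>c. lcomb B c = (\<lambda>_. 0) \<longrightarrow> (\<forall>b\<in>B. c b = 0)) \<and>
      V = {lcomb B c | c. True})"

definition hamming_wt :: "('n::finite \<Rightarrow> 'a::zero) \<Rightarrow> nat" where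
  "hamming_wt x = card {i. x i \<noteq> 0}"

text \<open>Linear [n,k,d] code (n = CARD('n)): k-dimensional subspace whose
minimum distance (minimum weight of a nonzero codeword) is d.\<close>
definition lin_code :: "('n::finite \<Rightarrow> 'a::field) set \<Rightarrow> nat \<Rightarrow> nat \<Rightarrow> bool" where
  "lin_code C k d \<longleftrightarrow> has_dim C k \<and>
     (\<exists>c\<in>C. c \<noteq> (\<lambda>_. 0) \<and> hamming_wt c = d) \<and> (\<forall>c\<in>C. c \<noteq> (\<lambda>_. 0) \<longrightarrow> d \<le> hamming_wt c)"

definition galois_form :: "nat \<Rightarrow> nat \<Rightarrow> ('n::finite \<Rightarrow> 'a::field) \<Rightarrow> ('n \<Rightarrow> 'a) \<Rightarrow> 'a" where
  "galois_form p s x y = (\<Sum>i\<in>UNIV. x i * y i ^ (p ^ s))"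

definition galois_dual :: "nat \<Rightarrow> nat \<Rightarrow> ('n::finite \<Rightarrow> 'a::field) set \<Rightarrow> ('n \<Rightarrow> 'a) set" where
  "galois_dual p s C = {x. \<forall>c\<in>C. galois_form p s c x = 0}"

definition euclid_dual :: "('n::finite \<Rightarrow> 'a::field) set \<Rightarrow> ('n \<Rightarrow> 'a) set" where
  "euclid_dual C = {x. \<forall>c\<in>C. (\<Sum>i\<in>UNIV. c i * x i) = 0}"

definition code_pow :: "('n \<Rightarrow> 'a::field) set \<Rightarrow> nat \<Rightarrow> ('n \<Rightarrow> 'a) set" where
  "code_pow C m = (\<lambda>c. \<lambda>i. c i ^ m) ` C"

definition trace :: "nat \<Rightarrow> nat \<Rightarrow> 'a::field \<Rightarrow> 'a" where
  "trace p e x = (\<Sum>i<e. x ^ (p ^ i))"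

text \<open>omega^(tr z) with omega = exp(2 pi i / p); tr z lies in the prime field,
identified with {0..<p}.\<close>
definition chi :: "nat \<Rightarrow> nat \<Rightarrow> 'a::field \<Rightarrow> complex" where
  "chi p e z = exp (2 * of_real pi * \<i> *
      of_nat (THE k. k < p \<and> of_nat k = trace p e z) / of_nat p)"

text \<open>States of V_n = (C^q)^{tensor n}: functions on the basis F_q^n.\<close>
definition qinner :: "(('n::finite \<Rightarrow> 'a::{field,finite}) \<Rightarrow> complex) \<Rightarrow> (('n \<Rightarrow> 'a) \<Rightarrow> complex) \<Rightarrow> complex" where
  "qinner u v = (\<Sum>x\<in>UNIV. cnj (u x) * v x)"

text \<open>The error omega^c X(a) Z(b) applied to a state v:
  X(a) Z(b) |x> = omega^(tr(b.x)) |x + a>.\<close>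
definition err_apply :: "nat \<Rightarrow> nat \<Rightarrow> nat \<Rightarrow> ('n::finite \<Rightarrow> 'a::{field,finite}) \<Rightarrow> ('n \<Rightarrow> 'a)
     \<Rightarrow> (('n \<Rightarrow> 'a) \<Rightarrow> complex) \<Rightarrow> (('n \<Rightarrow> 'a) \<Rightarrow> complex)" where
  "err_apply p e c a b v = (\<lambda>y. exp (2 * of_real pi * \<i> * of_nat c / of_nat p) *
       (\<Prod>i\<in>UNIV. chi p e (b i * (y i - a i))) * v (\<lambda>i. y i - a i))"

definition err_wt :: "('n::finite \<Rightarrow> 'a::zero) \<Rightarrow> ('n \<Rightarrow> 'a) \<Rightarrow> nat" where
  "err_wt a b = card {i. a i \<noteq> 0 \<or> b i \<noteq> 0}"

text \<open>Q has minimum distance d: every error of weight at most d-1 satisfies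
<u|E|v> = 0 for orthogonal u,v in Q; for k = 0 (dim Q = 1) purity is used.\<close>
definition qmin_dist :: "nat \<Rightarrow> nat \<Rightarrow> (('n::finite \<Rightarrow> 'a::{field,finite}) \<Rightarrow> complex) set \<Rightarrow> nat \<Rightarrow> bool" where
  "qmin_dist p e Q d \<longleftrightarrow>
     (\<forall>u\<in>Q. \<forall>v\<in>Q. qinner u v = 0 \<longrightarrow>
        (\<forall>c a b. c < p \<longrightarrow> err_wt a b < d \<longrightarrow> qinner u (err_apply p e c a b v) = 0)) \<and>
     (has_dim Q 1 \<longrightarrow> (\<forall>u\<in>Q. \<forall>c a b. c < p \<longrightarrow> 1 \<le> err_wt a b \<longrightarrow> err_wt a b < d \<longrightarrow>
        qinner u (err_apply p e c a b u) = 0))"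

definition pure_to :: "nat \<Rightarrow> nat \<Rightarrow> (('n::finite \<Rightarrow> 'a::{field,finite}) \<Rightarrow> complex) set \<Rightarrow> nat \<Rightarrow> bool" where
  "pure_to p e Q t \<longleftrightarrow> (\<forall>u\<in>Q. \<forall>v\<in>Q. \<forall>c a b. c < p \<longrightarrow> 1 \<le> err_wt a b \<longrightarrow> err_wt a b < t \<longrightarrow>
        qinner u (err_apply p e c a b v) = 0)"

text \<open>Quantum code [[n,k,d]]_q in V_n, n = CARD('n), q = CARD('a).\<close>
definition quantum_code :: "nat \<Rightarrow> nat \<Rightarrow> (('n::finite \<Rightarrow> 'a::{field,finite}) \<Rightarrow> complex) set \<Rightarrow> nat \<Rightarrow> nat \<Rightarrow> bool" where
  "quantum_code p e Q k d \<longleftrightarrow> has_dim Q (card (UNIV :: 'a set) ^ k) \<and> qmin_dist p e Q d"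

end

theory Submission
  imports Defs "HOL-Library.Cardinality" "HOL-Number_Theory.Residues" "HOL-Computational_Algebra.Polynomial"
begin

lemma char_p:
  assumes "prime p" "card (UNIV :: 'a::{field,finite} set) = p ^ e" "1 \<le> e"
  shows "CHAR('a) = p"
proof -
  have pos: "CHAR('a) > 0" by (rule finite_imp_CHAR_pos) simp
  have pr: "prime CHAR('a)" using pos prime_CHAR_semidom by blast
  have "CHAR('a) dvd p ^ e" using CHAR_dvd_CARD[where 'a='a] assms(2) by simp
  hence "CHAR('a) dvd p" using pr prime_dvd_power by blast
  thus ?thesis using pr assms(1) primes_dvd_imp_eq by blast
qed

lemma pow_card_same:
  fixes x :: "'a::{field,finite}"
  shows "x ^ card (UNIV :: 'a set) = x"
proof (cases "x = 0")
  case False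
  have "x * (\<Prod>y\<in>UNIV-{0}. x * y) = x * x ^ (card (UNIV :: 'a set) - 1) * \<Prod>(UNIV-{0})"
    by (simp add: prod.distrib mult_ac)
  also have "x * x ^ (card (UNIV :: 'a set) - 1) = x ^ Suc (card (UNIV :: 'a set) - 1)"
    by (subst power_Suc) auto
  also have "Suc (card (UNIV :: 'a set) - 1) = card (UNIV :: 'a set)"
    using finite_UNIV_card_ge_0[where ?'a = 'a] by simp
  also have "(\<Prod>y\<in>UNIV-{0}. x * y) = (\<Prod>y\<in>UNIV-{0}. y)"
    by (rule prod.reindex_bij_witness[of _ "\<lambda>y. y / x" "\<lambda>y. x * y"]) (use False in auto)
  finally show ?thesis
    by simp
qed (use finite_UNIV_card_ge_0[where ?'a = 'a] in auto)

lemma frob_add: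
  assumes "prime p" "card (UNIV :: 'a::{field,finite} set) = p ^ e" "1 \<le> e"
  shows "((x::'a) + y) ^ (p ^ j) = x ^ (p ^ j) + y ^ (p ^ j)"
proof -
  have c: "CHAR('a) = p" by (rule char_p[OF assms])
  show ?thesis by (rule freshmans_dream') (use c assms(1) in simp_all)
qed

lemma frob_sum:
  assumes "prime p" "card (UNIV :: 'a::{field,finite} set) = p ^ e" "1 \<le> e"
  shows "(sum (f::'b \<Rightarrow> 'a) A) ^ (p ^ j) = (\<Sum>i\<in>A. f i ^ (p ^ j))"
  by (induct A rule: infinite_finite_induct) (auto simp: frob_add[OF assms] power_0_left prime_gt_0_nat[OF assms(1)])


lemma exp_root_mod:
  assumes "(p::nat) > 0"
  shows "exp (2 * of_real pi * \<i> * of_nat (k mod p) / of_nat p) = exp (2 * of_real pi * \<i> * of_nat k / of_nat p)"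
proof -
  have k: "k = k mod p + p * (k div p)" by simp
  have "2 * of_real pi * \<i> * of_nat k / of_nat p =
        2 * of_real pi * \<i> * of_nat (k mod p) / of_nat p + of_nat (k div p) * (2 * of_real pi * \<i>)"
  proof -
    have kc: "complex_of_nat k = of_nat (k mod p) + of_nat p * of_nat (k div p)"
      by (metis k of_nat_add of_nat_mult)
    show ?thesis using assms by (simp add: kc field_simps)
  qed
  also have "exp \<dots> = exp (2 * of_real pi * \<i> * of_nat (k mod p) / of_nat p)"
    by (simp add: exp_add exp_of_nat_mult)
  finally show ?thesis by simp
qed

lemma exp_root_ne1:
  assumes "0 < k" "k < (p::nat)"
  shows "exp (2 * of_real pi * \<i> * of_nat k / of_nat p) \<noteq> 1"
proof
  assume h: "exp (2 * of_real pi * \<i> * of_nat k / of_nat p) = 1"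
  have eq: "2 * of_real pi * \<i> * of_nat k / of_nat p = \<i> * complex_of_real (2 * pi * k / p)"
    by simp
  have "cis (2 * pi * k / p) = 1" unfolding cis_conv_exp eq[symmetric] by (rule h)
  hence "cos (2 * pi * k / p) = 1" by (metis cis.sel(1) one_complex.sel(1))
  then obtain n :: int where n: "2 * pi * k / p = n * 2 * pi" using cos_one_2pi_int[of "2 * pi * k / p"] by auto
  have "real k = real_of_int n * p" using n assms by (simp add: field_simps)
  hence "int k = n * int p" by (metis of_int_eq_iff of_int_mult of_int_of_nat_eq)
  hence "int p dvd int k" by simp
  thus False using assms by (simp add: zdvd_imp_le) (meson nat_dvd_not_less)
qed


definition dotp :: "('n::finite \<Rightarrow> 'a::field) \<Rightarrow> ('n \<Rightarrow> 'a) \<Rightarrow> 'a" where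
  "dotp x y = (\<Sum>i\<in>UNIV. x i * y i)"

definition subsp :: "('n::finite \<Rightarrow> 'a::field) set \<Rightarrow> bool" where
  "subsp W \<longleftrightarrow> (\<lambda>_. 0) \<in> W \<and> (\<forall>x\<in>W. \<forall>y\<in>W. (\<lambda>i. x i + y i) \<in> W) \<and> (\<forall>c. \<forall>x\<in>W. (\<lambda>i. c * x i) \<in> W)"

lemma dotp_comm: "dotp x y = dotp y x"
  unfolding dotp_def by (simp add: mult.commute)

lemma dotp_add: "dotp (\<lambda>i. x i + y i) z = dotp x z + dotp y z"
  unfolding dotp_def by (simp add: distrib_right sum.distrib)

lemma dotp_scale: "dotp (\<lambda>i. c * x i) z = c * dotp x z"
  unfolding dotp_def by (simp add: sum_distrib_left mult.assoc)

lemma dotp_zero: "dotp (\<lambda>_. 0) z = 0"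
  unfolding dotp_def by simp

lemma euclid_dual_dotp: "euclid_dual C = {x. \<forall>c\<in>C. dotp c x = 0}"
  unfolding euclid_dual_def dotp_def ..

lemma subsp_UNIV: "subsp UNIV" unfolding subsp_def by simp

lemma subsp_dual: "subsp (euclid_dual C)"
proof -
  have a: "dotp c (\<lambda>i. x i + y i) = dotp c x + dotp c y" for c x y
    by (simp add: dotp_comm[of c] dotp_add)
  have b: "dotp c (\<lambda>i. a * x i) = a * dotp c x" for c x a
    by (simp add: dotp_comm[of c] dotp_scale)
  have z: "dotp c (\<lambda>_. 0) = 0" for c
    by (simp add: dotp_comm[of c] dotp_zero)
  show ?thesis unfolding subsp_def euclid_dual_dotp by (simp add: a b z)
qed

lemma subsp_neg: "subsp W \<Longrightarrow> x \<in> W \<Longrightarrow> (\<lambda>i. - x i) \<in> W"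
proof -
  assume "subsp W" "x \<in> W"
  hence "(\<lambda>i. (-1) * x i) \<in> W" unfolding subsp_def by blast
  thus ?thesis by simp
qed

lemma subsp_diff: "subsp W \<Longrightarrow> x \<in> W \<Longrightarrow> y \<in> W \<Longrightarrow> (\<lambda>i. x i - y i) \<in> W"
proof -
  assume a: "subsp W" "x \<in> W" "y \<in> W"
  have neg: "(\<lambda>i. - y i) \<in> W" using subsp_neg a(1,3) .
  have "\<forall>u\<in>W. \<forall>v\<in>W. (\<lambda>i. u i + v i) \<in> W" using a(1) unfolding subsp_def by blast
  from this[rule_format, OF a(2) neg] show ?thesis by simp
qed

lemma subsp_add: "subsp W \<Longrightarrow> x \<in> W \<Longrightarrow> y \<in> W \<Longrightarrow> (\<lambda>i. x i + y i) \<in> W"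
  unfolding subsp_def by blast

lemma subsp_scale: "subsp W \<Longrightarrow> x \<in> W \<Longrightarrow> (\<lambda>i. c * x i) \<in> W"
  unfolding subsp_def by blast

lemma subsp_zero: "subsp W \<Longrightarrow> (\<lambda>_. 0) \<in> W"
  unfolding subsp_def by blast

lemma lcomb_add: "lcomb B (\<lambda>b. c1 b + c2 b) = (\<lambda>x. lcomb B c1 x + lcomb B c2 x)"
  unfolding lcomb_def by (simp add: distrib_right sum.distrib)

lemma has_dim_subsp: "has_dim C k \<Longrightarrow> subsp C"
proof -
  assume "has_dim C k"
  then obtain B where B: "finite B" "C = {lcomb B c | c. True}" unfolding has_dim_def by auto
  have z: "(\<lambda>_. 0) = lcomb B (\<lambda>_. 0)" unfolding lcomb_def by simp
  have sc: "(\<lambda>i. a * lcomb B c i) = lcomb B (\<lambda>b. a * c b)" for a c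
    unfolding lcomb_def by (simp add: sum_distrib_left mult.assoc)
  have ad: "(\<lambda>i. lcomb B c1 i + lcomb B c2 i) = lcomb B (\<lambda>b. c1 b + c2 b)" for c1 c2
    by (rule lcomb_add[symmetric])
  show ?thesis unfolding subsp_def B(2)
  proof (intro conjI ballI allI)
    show "(\<lambda>_. 0) \<in> {lcomb B c |c. True}" using z by blast
  next
    fix x y assume "x \<in> {lcomb B c |c. True}" "y \<in> {lcomb B c |c. True}"
    then obtain c1 c2 where "x = lcomb B c1" "y = lcomb B c2" by blast
    thus "(\<lambda>i. x i + y i) \<in> {lcomb B c |c. True}" using ad by blast
  next
    fix a x assume "x \<in> {lcomb B c |c. True}"
    then obtain c1 where "x = lcomb B c1" by blast
    thus "(\<lambda>i. a * x i) \<in> {lcomb B c |c. True}" using sc by blast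
  qed
qed

lemma has_dim_card:
  assumes "has_dim (C :: ('n::finite \<Rightarrow> 'a::{field,finite}) set) k"
  shows "card C = card (UNIV :: 'a set) ^ k"
proof -
  obtain B where B: "finite B" "card B = k" "B \<subseteq> C"
     "\<forall>c. lcomb B c = (\<lambda>_. 0) \<longrightarrow> (\<forall>b\<in>B. c b = 0)" "C = {lcomb B c | c. True}"
    using assms unfolding has_dim_def by blast
  have res: "lcomb B c = lcomb B (restrict c B)" for c
    unfolding lcomb_def by (intro ext sum.cong) auto
  have img: "C = lcomb B ` (B \<rightarrow>\<^sub>E UNIV)"
  proof
    show "C \<subseteq> lcomb B ` (B \<rightarrow>\<^sub>E UNIV)"
    proof
      fix x assume "x \<in> C"
      then obtain c where "x = lcomb B c" using B(5) by blast
      hence "x = lcomb B (restrict c B)" using res by simp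
      moreover have "restrict c B \<in> B \<rightarrow>\<^sub>E UNIV" by simp
      ultimately show "x \<in> lcomb B ` (B \<rightarrow>\<^sub>E UNIV)" by blast
    qed
  qed (use B(5) in blast)
  have inj: "inj_on (lcomb B) (B \<rightarrow>\<^sub>E UNIV)"
  proof (rule inj_onI)
    fix c1 c2 assume c: "c1 \<in> B \<rightarrow>\<^sub>E UNIV" "c2 \<in> B \<rightarrow>\<^sub>E UNIV" "lcomb B c1 = lcomb B c2"
    have "lcomb B (\<lambda>b. c1 b - c2 b) = (\<lambda>_. 0)" using c(3)
      unfolding lcomb_def by (simp add: left_diff_distrib sum_subtractf fun_eq_iff)
    hence "\<forall>b\<in>B. c1 b = c2 b" using B(4) by fastforce
    thus "c1 = c2" using c(1,2) by (auto intro!: extensionalityI[of _ B] simp: PiE_iff)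
  qed
  have "card C = card (B \<rightarrow>\<^sub>E (UNIV :: 'a set))" using img inj card_image by metis
  also have "\<dots> = card (UNIV :: 'a set) ^ k" using B(1,2) by (simp add: card_PiE)
  finally show ?thesis .
qed

context
  fixes p e :: nat
  assumes pr: "prime p" and cardq: "card (UNIV :: 'a::{field,finite} set) = p ^ e" and e1: "1 \<le> e"
begin

lemma p_gt1: "p > 1" using pr prime_gt_1_nat by blast

lemma CHARp: "CHAR('a) = p" by (rule char_p[OF pr cardq e1])

lemma frobA: "((x::'a) + y) ^ (p ^ j) = x ^ (p ^ j) + y ^ (p ^ j)"
  by (rule frob_add[OF pr cardq e1])

lemma frobS: "(sum (f::'b \<Rightarrow> 'a) A) ^ (p ^ j) = (\<Sum>i\<in>A. f i ^ (p ^ j))"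
  by (rule frob_sum[OF pr cardq e1])

lemma pow_pe: "(x::'a) ^ (p ^ e) = x"
  using pow_card_same[of x] cardq by simp

lemma tr_add: "trace p e ((x::'a) + y) = trace p e x + trace p e y"
  unfolding trace_def by (simp add: frobA sum.distrib)

lemma tr_pow: "(trace p e (z::'a)) ^ p = trace p e z"
proof -
  obtain m where m: "e = Suc m" using e1 by (cases e) auto
  have "(trace p e z) ^ (p^1) = (\<Sum>i<e. (z ^ (p ^ i)) ^ (p^1))"
    unfolding trace_def by (rule frobS)
  also have "\<dots> = (\<Sum>i<e. z ^ (p ^ Suc i))"
    by (simp add: power_mult[symmetric] mult.commute)
  also have "\<dots> = (\<Sum>i<m. z ^ (p ^ Suc i)) + z ^ (p ^ e)"
    by (simp add: m)
  also have "\<dots> = (\<Sum>i<m. z ^ (p ^ Suc i)) + z ^ (p ^ 0)"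
    by (simp add: pow_pe)
  also have "\<dots> = trace p e z"
    unfolding trace_def m sum.lessThan_Suc_shift by (simp only: add.commute)
  finally show ?thesis by simp
qed

lemma of_nat_pow_p: "(of_nat k :: 'a) ^ p = of_nat k"
proof (induction k)
  case 0 then show ?case using p_gt1 by simp
next
  case (Suc k)
  have "(1 + of_nat k :: 'a) ^ (p^1) = 1 ^ (p^1) + (of_nat k) ^ (p^1)"
    by (rule frobA)
  then show ?case using Suc by simp
qed

lemma of_nat_inj_p: "j < p \<Longrightarrow> k < p \<Longrightarrow> (of_nat j :: 'a) = of_nat k \<Longrightarrow> j = k"
  using of_nat_eq_iff_cong_CHAR[where 'a='a, of j k] CHARp
  by (metis cong_less_modulus_unique_nat)

lemma roots_p_card: "card {y::'a. y ^ p = y} \<le> p"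
proof -
  define P :: "'a poly" where "P = monom 1 p - [:0,1:]"
  have ev: "poly P y = y ^ p - y" for y by (simp add: P_def poly_monom)
  have "coeff [:0,1::'a:] p = 0" by (rule coeff_eq_0) (use p_gt1 in simp)
  hence cp: "coeff P p = 1" using p_gt1 by (simp add: P_def coeff_monom)
  hence "P \<noteq> 0" by auto
  have dp: "degree P \<le> p" unfolding P_def
    by (rule order.trans[OF degree_diff_le_max]) (use p_gt1 in \<open>auto simp: degree_monom_eq\<close>)
  have "{y::'a. y ^ p = y} = {y. poly P y = 0}" by (auto simp: ev)
  hence "card {y::'a. y ^ p = y} \<le> degree P" using card_poly_roots_bound[OF \<open>P \<noteq> 0\<close>] by simp
  thus ?thesis using dp by simp
qed

lemma prime_field: "{y::'a. y ^ p = y} = of_nat ` {..<p}"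
proof -
  have sub: "of_nat ` {..<p} \<subseteq> {y::'a. y ^ p = y}" using of_nat_pow_p by auto
  have "card (of_nat ` {..<p} :: 'a set) = p"
    by (subst card_image) (auto intro!: inj_onI of_nat_inj_p)
  thus ?thesis using roots_p_card sub
    by (metis card_seteq finite)
qed

lemma tk_ex1: "\<exists>!k. k < p \<and> of_nat k = trace p e (z::'a)"
proof -
  have "trace p e z \<in> of_nat ` {..<p}" using tr_pow prime_field by blast
  then obtain k where "k < p" "of_nat k = trace p e z" by auto
  thus ?thesis using of_nat_inj_p by metis
qed

lemma tr_nonzero: "\<exists>z::'a. trace p e z \<noteq> 0"
proof (rule ccontr)
  assume "\<not> ?thesis"
  hence all: "\<And>z::'a. trace p e z = 0" by simp
  obtain m where m: "e = Suc m" using e1 by (cases e) auto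
  define P :: "'a poly" where "P = (\<Sum>i<e. monom 1 (p ^ i))"
  have ev: "poly P z = trace p e z" for z by (simp add: P_def trace_def poly_sum poly_monom)
  have injp: "p ^ i = p ^ m \<longleftrightarrow> i = m" for i using p_gt1 by (simp add: power_inject_exp)
  have "coeff P (p ^ m) = (\<Sum>i<e. if i = m then 1 else 0)"
    by (simp add: P_def coeff_sum coeff_monom injp)
  also have "\<dots> = 1" using m by simp
  finally have "P \<noteq> 0" by auto
  have dp: "degree P \<le> p ^ m" unfolding P_def
    by (rule degree_sum_le) (insert p_gt1, auto simp: degree_monom_eq m intro: power_increasing)
  have "card {z::'a. poly P z = 0} \<le> degree P" by (rule card_poly_roots_bound[OF \<open>P \<noteq> 0\<close>])
  moreover have "{z::'a. poly P z = 0} = UNIV" using all ev by auto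
  ultimately have "p ^ e \<le> p ^ m" using cardq dp by simp
  thus False using p_gt1 m by simp
qed


definition tk :: "'a \<Rightarrow> nat" where "tk z = (THE k. k < p \<and> of_nat k = trace p e z)"

lemma tk: "tk z < p" "of_nat (tk z) = trace p e z"
  using theI'[OF tk_ex1[of z]] unfolding tk_def by auto

lemma chi_tk: "chi p e z = exp (2 * of_real pi * \<i> * of_nat (tk z) / of_nat p)"
  unfolding chi_def tk_def ..

lemma tk_add: "tk (z + w) = (tk z + tk w) mod p"
proof -
  have "[(tk z + tk w) mod p = tk z + tk w] (mod CHAR('a))" using CHARp by (simp add: cong_def)
  hence "of_nat ((tk z + tk w) mod p) = (of_nat (tk z + tk w) :: 'a)"
    using of_nat_eq_iff_cong_CHAR by blast
  also have "\<dots> = trace p e (z + w)" by (simp add: tk tr_add)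
  finally have "(tk z + tk w) mod p < p \<and> of_nat ((tk z + tk w) mod p) = trace p e (z + w)"
    using p_gt1 by simp
  thus ?thesis using tk[of "z+w"] tk_ex1[of "z+w"] by blast
qed

lemma chi_add: "chi p e ((z::'a) + w) = chi p e z * chi p e w"
proof -
  have "chi p e (z + w) = exp (2 * of_real pi * \<i> * of_nat (tk z + tk w) / of_nat p)"
    unfolding chi_tk tk_add using exp_root_mod p_gt1 by simp
  also have "\<dots> = chi p e z * chi p e w" unfolding chi_tk
    by (simp add: exp_add[symmetric] add_divide_distrib distrib_left)
  finally show ?thesis .
qed

lemma tr_0: "trace p e (0::'a) = 0"
  unfolding trace_def using p_gt1 by (simp add: power_0_left)

lemma chi_0: "chi p e (0::'a) = 1"
proof -
  have "tk (0::'a) = 0" 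
  proof -
    have "0 < p \<and> of_nat 0 = trace p e (0::'a)" using tr_0 p_gt1 by simp
    thus ?thesis using tk[of 0] tk_ex1[of 0] by blast
  qed
  thus ?thesis unfolding chi_tk by simp
qed

lemma chi_ne1: "trace p e (z::'a) \<noteq> 0 \<Longrightarrow> chi p e z \<noteq> 1"
proof -
  assume "trace p e z \<noteq> 0"
  hence "tk z \<noteq> 0" using tk(2)[of z] by (metis of_nat_0)
  thus ?thesis unfolding chi_tk using exp_root_ne1 tk(1)[of z] by simp
qed

lemma chi_sum: "finite A \<Longrightarrow> chi p e (\<Sum>i\<in>A. f i :: 'a) = (\<Prod>i\<in>A. chi p e (f i))"
  by (induct A rule: finite_induct) (auto simp: chi_0 chi_add)

lemma chi_nonzero: "\<exists>z::'a. chi p e z \<noteq> 1"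
  using tr_nonzero chi_ne1 by blast


lemma char_sum_zero:
  fixes W :: "('n::finite \<Rightarrow> 'a) set"
  assumes W: "subsp W" and w0: "w0 \<in> W" and nz: "dotp w0 x \<noteq> 0"
  shows "(\<Sum>w\<in>W. chi p e (dotp w x)) = 0"
proof -
  obtain z :: 'a where z: "trace p e z \<noteq> 0" using tr_nonzero by blast
  define w1 where "w1 = (\<lambda>i. (z / dotp w0 x) * w0 i)"
  have w1W: "w1 \<in> W" using W w0 unfolding w1_def subsp_def by blast
  have dw1: "dotp w1 x = z" unfolding w1_def dotp_scale using nz by simp
  have "(\<Sum>w\<in>W. chi p e (dotp w x)) = (\<Sum>w\<in>W. chi p e (dotp (\<lambda>i. w i + w1 i) x))"
  proof (rule sum.reindex_bij_witness[of _ "\<lambda>w. (\<lambda>i. w i + w1 i)" "\<lambda>w. (\<lambda>i. w i - w1 i)"])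
    fix w assume "w \<in> W"
    thus "(\<lambda>i. w i - w1 i) \<in> W" using subsp_diff[OF W _ w1W] by blast
    show "(\<lambda>i. (\<lambda>i. w i - w1 i) i + w1 i) = w" by simp
    show "(\<lambda>i. (\<lambda>i. w i + w1 i) i - w1 i) = w" by simp
    show "chi p e (dotp (\<lambda>i. w i - w1 i + w1 i) x) = chi p e (dotp w x)" by simp
    show "(\<lambda>i. w i + w1 i) \<in> W" using W \<open>w \<in> W\<close> w1W unfolding subsp_def by blast
  qed
  also have "\<dots> = (\<Sum>w\<in>W. chi p e (dotp w x)) * chi p e z"
    by (simp add: dotp_add chi_add dw1 sum_distrib_right)
  finally have "(\<Sum>w\<in>W. chi p e (dotp w x)) * (1 - chi p e z) = 0" by (simp add: algebra_simps)
  thus ?thesis using chi_ne1[OF z] by simp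
qed

lemma card_dual:
  fixes W :: "('n::finite \<Rightarrow> 'a) set"
  assumes W: "subsp W"
  shows "card W * card (euclid_dual W) = card (UNIV :: 'a set) ^ card (UNIV :: 'n set)"
proof -
  let ?S = "\<lambda>x. (\<Sum>w\<in>W. chi p e (dotp w x))"
  have inner: "?S x = (if x \<in> euclid_dual W then of_nat (card W) else 0)" for x
  proof (cases "x \<in> euclid_dual W")
    case True
    hence "\<forall>w\<in>W. dotp w x = 0" unfolding euclid_dual_dotp by blast
    thus ?thesis using True by (simp add: chi_0)
  next
    case False
    then obtain w0 where "w0 \<in> W" "dotp w0 x \<noteq> 0" unfolding euclid_dual_dotp by blast
    thus ?thesis using False char_sum_zero[OF W] by simp
  qed
  have "(\<Sum>x\<in>UNIV. ?S x) = (\<Sum>x\<in>euclid_dual W. of_nat (card W))"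
    by (simp add: inner sum.If_cases)
  also have "\<dots> = of_nat (card W * card (euclid_dual W))" by simp
  finally have L: "(\<Sum>x\<in>UNIV. ?S x) = of_nat (card W * card (euclid_dual W))" .
  define e0 :: "'n \<Rightarrow> 'n \<Rightarrow> 'a" where "e0 = (\<lambda>j i. if i = j then 1 else 0)"
  have outer: "(\<Sum>x\<in>UNIV. chi p e (dotp w x)) = (if w = (\<lambda>_. 0) then of_nat CARD('n \<Rightarrow> 'a) else 0)" for w :: "'n \<Rightarrow> 'a"
  proof (cases "w = (\<lambda>_. 0)")
    case True
    thus ?thesis by (simp add: dotp_zero chi_0)
  next
    case False
    then obtain j where j: "w j \<noteq> 0" by auto
    have "(\<lambda>i. e0 j i * w i) = (\<lambda>i. if i = j then w i else 0)" unfolding e0_def by auto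
    hence "dotp (e0 j) w = w j" unfolding dotp_def by (simp only:) simp
    hence "(\<Sum>x\<in>UNIV. chi p e (dotp x w)) = 0"
      using char_sum_zero[OF subsp_UNIV, of "e0 j" w] j by simp
    thus ?thesis using False by (simp add: dotp_comm[of w])
  qed
  have "(\<Sum>x\<in>UNIV. ?S x) = (\<Sum>w\<in>W. \<Sum>x\<in>UNIV. chi p e (dotp w x))"
    by (rule sum.swap)
  also have "\<dots> = (\<Sum>w\<in>W. if w = (\<lambda>_. 0) then of_nat CARD('n \<Rightarrow> 'a) else 0)"
    by (simp add: outer)
  also have "\<dots> = of_nat CARD('n \<Rightarrow> 'a)"
    using W unfolding subsp_def by (simp add: sum.delta)
  finally have "of_nat (card W * card (euclid_dual W)) = (of_nat CARD('n \<Rightarrow> 'a) :: complex)"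
    using L by simp
  hence "card W * card (euclid_dual W) = CARD('n \<Rightarrow> 'a)" by (simp only: of_nat_eq_iff)
  thus ?thesis by (simp add: card_fun)
qed


lemma err_formula:
  fixes u v :: "('n::finite \<Rightarrow> 'a) \<Rightarrow> complex"
  shows "qinner u (err_apply p e c a b v) = exp (2 * of_real pi * \<i> * of_nat c / of_nat p) *
     (\<Sum>x\<in>UNIV. cnj (u (\<lambda>i. x i + a i)) * chi p e (dotp b x) * v x)"
proof -
  have pr: "(\<Prod>i\<in>UNIV. chi p e (b i * (y i - a i))) = chi p e (dotp b (\<lambda>i. y i - a i))" for y :: "'n \<Rightarrow> 'a"
    unfolding dotp_def by (rule chi_sum[symmetric]) simp
  have "qinner u (err_apply p e c a b v) =
     (\<Sum>y\<in>UNIV. cnj (u y) * (exp (2 * of_real pi * \<i> * of_nat c / of_nat p) *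
        chi p e (dotp b (\<lambda>i. y i - a i)) * v (\<lambda>i. y i - a i)))"
    unfolding qinner_def err_apply_def pr ..
  also have "\<dots> = (\<Sum>x\<in>UNIV. cnj (u (\<lambda>i. x i + a i)) * (exp (2 * of_real pi * \<i> * of_nat c / of_nat p) *
        chi p e (dotp b x) * v x))"
    by (rule sum.reindex_bij_witness[of _ "\<lambda>y. (\<lambda>i. y i + a i)" "\<lambda>x. (\<lambda>i. x i - a i)"]) auto
  also have "\<dots> = exp (2 * of_real pi * \<i> * of_nat c / of_nat p) *
     (\<Sum>x\<in>UNIV. cnj (u (\<lambda>i. x i + a i)) * chi p e (dotp b x) * v x)"
    by (simp add: sum_distrib_left mult_ac)
  finally show ?thesis .
qed

lemma Z1:
  fixes u v :: "('n::finite \<Rightarrow> 'a) \<Rightarrow> complex"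
  assumes C: "subsp C1" and a: "a \<notin> C1"
    and su: "\<And>y. y \<notin> C1 \<Longrightarrow> u y = 0" and sv: "\<And>y. y \<notin> C1 \<Longrightarrow> v y = 0"
  shows "(\<Sum>x\<in>UNIV. cnj (u (\<lambda>i. x i + a i)) * chi p e (dotp b x) * v x) = 0"
proof (rule sum.neutral, rule ballI)
  fix x :: "'n \<Rightarrow> 'a"
  show "cnj (u (\<lambda>i. x i + a i)) * chi p e (dotp b x) * v x = 0"
  proof (cases "x \<in> C1")
    case True
    have "(\<lambda>i. x i + a i) \<notin> C1"
    proof
      assume "(\<lambda>i. x i + a i) \<in> C1"
      from subsp_diff[OF C this True] have "(\<lambda>i. x i + a i - x i) \<in> C1" .
      thus False using a by simp
    qed
    thus ?thesis using su by simp
  qed (use sv in simp)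
qed

lemma Z2:
  fixes u v :: "('n::finite \<Rightarrow> 'a) \<Rightarrow> complex"
  assumes S: "subsp S" and s0: "s0 \<in> S" and nz: "dotp s0 b \<noteq> 0"
    and hu: "\<And>y s. s \<in> S \<Longrightarrow> u (\<lambda>i. y i + s i) = u y"
    and hv: "\<And>y s. s \<in> S \<Longrightarrow> v (\<lambda>i. y i + s i) = v y"
  shows "(\<Sum>x\<in>UNIV. cnj (u (\<lambda>i. x i + a i)) * chi p e (dotp b x) * v x) = 0"
proof -
  obtain z :: 'a where z: "trace p e z \<noteq> 0" using tr_nonzero by blast
  define s1 where "s1 = (\<lambda>i. (z / dotp s0 b) * s0 i)"
  have s1S: "s1 \<in> S" using S s0 unfolding s1_def subsp_def by blast
  have ds1: "dotp b s1 = z" unfolding dotp_comm[of b] s1_def dotp_scale using nz by simp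
  let ?G = "\<lambda>x. cnj (u (\<lambda>i. x i + a i)) * chi p e (dotp b x) * v x"
  have "(\<Sum>x\<in>UNIV. ?G x) = (\<Sum>x\<in>UNIV. ?G (\<lambda>i. x i + s1 i))"
    by (rule sum.reindex_bij_witness[of _ "\<lambda>x. (\<lambda>i. x i + s1 i)" "\<lambda>x. (\<lambda>i. x i - s1 i)"]) auto
  also have "\<dots> = (\<Sum>x\<in>UNIV. ?G x * chi p e z)"
  proof (rule sum.cong[OF refl])
    fix x :: "'n \<Rightarrow> 'a"
    have "u (\<lambda>i. x i + s1 i + a i) = u (\<lambda>i. (\<lambda>i. x i + a i) i + s1 i)" by (simp add: add_ac)
    also have "\<dots> = u (\<lambda>i. x i + a i)" by (rule hu[OF s1S])
    finally have 1: "u (\<lambda>i. x i + s1 i + a i) = u (\<lambda>i. x i + a i)" .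
    have 2: "dotp b (\<lambda>i. x i + s1 i) = dotp b x + z"
      using ds1 by (simp add: dotp_comm[of b] dotp_add)
    show "?G (\<lambda>i. x i + s1 i) = ?G x * chi p e z"
      using 1 2 hv[OF s1S] by (simp add: chi_add mult_ac)
  qed
  also have "\<dots> = (\<Sum>x\<in>UNIV. ?G x) * chi p e z" by (simp add: sum_distrib_right)
  finally have "(\<Sum>x\<in>UNIV. ?G x) * (1 - chi p e z) = 0" by (simp add: algebra_simps)
  thus ?thesis using chi_ne1[OF z] by simp
qed

lemma Z3:
  fixes u v :: "('n::finite \<Rightarrow> 'a) \<Rightarrow> complex"
  assumes aS: "a \<in> S" and b: "b \<in> euclid_dual C1"
    and sv: "\<And>y. y \<notin> C1 \<Longrightarrow> v y = 0"
    and hu: "\<And>y s. s \<in> S \<Longrightarrow> u (\<lambda>i. y i + s i) = u y"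
  shows "(\<Sum>x\<in>UNIV. cnj (u (\<lambda>i. x i + a i)) * chi p e (dotp b x) * v x) = qinner u v"
  unfolding qinner_def
proof (rule sum.cong[OF refl])
  fix x :: "'n \<Rightarrow> 'a"
  show "cnj (u (\<lambda>i. x i + a i)) * chi p e (dotp b x) * v x = cnj (u x) * v x"
  proof (cases "x \<in> C1")
    case True
    have "dotp b x = 0" using b True unfolding euclid_dual_dotp by (simp add: dotp_comm[of b])
    thus ?thesis using hu[OF aS] by (simp add: chi_0)
  qed (use sv in simp)
qed

end


definition cosetS :: "('n::finite \<Rightarrow> 'a::field) set \<Rightarrow> ('n \<Rightarrow> 'a) \<Rightarrow> ('n \<Rightarrow> 'a) set" where
  "cosetS S x = {y. (\<lambda>i. y i - x i) \<in> S}"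

definition indc :: "'b set \<Rightarrow> 'b \<Rightarrow> complex" where
  "indc A = (\<lambda>y. if y \<in> A then 1 else 0)"

lemma coset_mem: "subsp S \<Longrightarrow> x \<in> cosetS S x"
  unfolding cosetS_def subsp_def by simp

lemma coset_eq:
  assumes S: "subsp S" and y: "y \<in> cosetS S x"
  shows "cosetS S y = cosetS S x"
proof -
  have yx: "(\<lambda>i. y i - x i) \<in> S" using y unfolding cosetS_def by simp
  show ?thesis
  proof (rule equalityI; rule subsetI)
    fix z assume "z \<in> cosetS S y"
    hence "(\<lambda>i. z i - y i) \<in> S" unfolding cosetS_def by simp
    from subsp_add[OF S this yx] have "(\<lambda>i. z i - y i + (y i - x i)) \<in> S" .
    thus "z \<in> cosetS S x" unfolding cosetS_def by simp
  next
    fix z assume "z \<in> cosetS S x"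
    hence "(\<lambda>i. z i - x i) \<in> S" unfolding cosetS_def by simp
    from subsp_diff[OF S this yx] have "(\<lambda>i. z i - x i - (y i - x i)) \<in> S" .
    thus "z \<in> cosetS S y" unfolding cosetS_def by simp
  qed
qed

lemma coset_shift:
  assumes S: "subsp S" and s: "s \<in> S"
  shows "(\<lambda>i. y i + s i) \<in> cosetS S x \<longleftrightarrow> y \<in> cosetS S x"
proof
  assume "(\<lambda>i. y i + s i) \<in> cosetS S x"
  hence "(\<lambda>i. y i + s i - x i) \<in> S" unfolding cosetS_def by simp
  from subsp_diff[OF S this s] have "(\<lambda>i. y i + s i - x i - s i) \<in> S" .
  thus "y \<in> cosetS S x" unfolding cosetS_def by (simp add: algebra_simps)
next
  assume "y \<in> cosetS S x"
  hence "(\<lambda>i. y i - x i) \<in> S" unfolding cosetS_def by simp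
  from subsp_add[OF S this s] have "(\<lambda>i. y i - x i + s i) \<in> S" .
  thus "(\<lambda>i. y i + s i) \<in> cosetS S x" unfolding cosetS_def by (simp add: algebra_simps)
qed

lemma coset_sub:
  assumes S: "subsp S" and C: "subsp C1" and SC: "S \<subseteq> C1" and x: "x \<in> C1"
  shows "cosetS S x \<subseteq> C1"
proof
  fix y assume "y \<in> cosetS S x"
  hence "(\<lambda>i. y i - x i) \<in> C1" using SC unfolding cosetS_def by auto
  from subsp_add[OF C this x] have "(\<lambda>i. y i - x i + x i) \<in> C1" .
  thus "y \<in> C1" by simp
qed

lemma coset_card:
  assumes S: "subsp S"
  shows "card (cosetS S x) = card S"
proof -
  have "bij_betw (\<lambda>y. (\<lambda>i. y i - x i)) (cosetS S x) S"
    by (rule bij_betw_byWitness[of _ "\<lambda>s. (\<lambda>i. s i + x i)"]) (auto simp: cosetS_def)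
  thus ?thesis by (rule bij_betw_same_card)
qed

lemma coset_count:
  fixes C1 :: "('n::finite \<Rightarrow> 'a::{field,finite}) set"
  assumes S: "subsp S" and C: "subsp C1" and SC: "S \<subseteq> C1"
  shows "card S * card (cosetS S ` C1) = card C1"
proof -
  have U: "\<Union>(cosetS S ` C1) = C1"
    using coset_sub[OF S C SC] coset_mem[OF S] by blast
  have "card S * card (cosetS S ` C1) = card (\<Union>(cosetS S ` C1))"
  proof -
    have d: "\<And>x1 x2 z. z \<in> cosetS S x1 \<Longrightarrow> z \<in> cosetS S x2 \<Longrightarrow> cosetS S x1 = cosetS S x2"
      using coset_eq[OF S] by metis
    show ?thesis by (rule card_partition) (auto simp: coset_card[OF S] dest: d)
  qed
  thus ?thesis using U by simp
qed

lemma indc_inj: "inj indc"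
proof (rule injI)
  fix A B :: "'b set" assume "indc A = indc B"
  hence "\<And>y. (y \<in> A) = (y \<in> B)" unfolding indc_def by (metis one_neq_zero fun_cong)
  thus "A = B" by blast
qed

definition QQ :: "('n::finite \<Rightarrow> 'a::{field,finite}) set \<Rightarrow> ('n \<Rightarrow> 'a) set \<Rightarrow> (('n \<Rightarrow> 'a) \<Rightarrow> complex) set" where
  "QQ S C1 = {lcomb (indc ` cosetS S ` C1) c | c. True}"

context
  fixes S C1 :: "('n::finite \<Rightarrow> 'a::{field,finite}) set"
  assumes S: "subsp S" and C: "subsp C1" and SC: "S \<subseteq> C1"
begin

lemma Q_supp: "u \<in> QQ S C1 \<Longrightarrow> y \<notin> C1 \<Longrightarrow> u y = 0"
proof -
  assume "u \<in> QQ S C1" "y \<notin> C1"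
  then obtain c where u: "u = lcomb (indc ` cosetS S ` C1) c" unfolding QQ_def by blast
  have "\<forall>b\<in>indc ` cosetS S ` C1. b y = 0"
    using coset_sub[OF S C SC] \<open>y \<notin> C1\<close> unfolding indc_def by auto
  hence "(\<Sum>b\<in>indc ` cosetS S ` C1. c b * b y) = 0" by (intro sum.neutral) simp
  thus ?thesis unfolding u lcomb_def by simp
qed

lemma Q_shift: "u \<in> QQ S C1 \<Longrightarrow> s \<in> S \<Longrightarrow> u (\<lambda>i. y i + s i) = u y"
proof -
  assume "u \<in> QQ S C1" "s \<in> S"
  then obtain c where u: "u = lcomb (indc ` cosetS S ` C1) c" unfolding QQ_def by blast
  have "\<forall>b\<in>indc ` cosetS S ` C1. b (\<lambda>i. y i + s i) = b y"
    using coset_shift[OF S \<open>s \<in> S\<close>] unfolding indc_def by auto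
  hence "(\<Sum>b\<in>indc ` cosetS S ` C1. c b * b (\<lambda>i. y i + s i)) = (\<Sum>b\<in>indc ` cosetS S ` C1. c b * b y)"
  proof (intro sum.cong[OF refl])
    fix b assume "\<forall>b\<in>indc ` cosetS S ` C1. b (\<lambda>i. y i + s i) = b y" "b \<in> indc ` cosetS S ` C1"
    hence "b (\<lambda>i. y i + s i) = b y" by blast
    thus "c b * b (\<lambda>i. y i + s i) = c b * b y" by simp
  qed
  thus ?thesis unfolding u lcomb_def by simp
qed

lemma Q_ind: "x \<in> C1 \<Longrightarrow> indc (cosetS S x) \<in> QQ S C1"
proof -
  assume x: "x \<in> C1"
  let ?B = "indc ` cosetS S ` C1"
  let ?b = "indc (cosetS S x)"
  have fB: "finite ?B" by simp
  have b: "?b \<in> ?B" using x by blast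
  have "lcomb ?B (\<lambda>b'. if b' = ?b then 1 else 0) = ?b"
    unfolding lcomb_def
  proof (rule ext)
    fix y
    have "(\<Sum>ba\<in>?B. (if ba = ?b then 1 else 0) * ba y) = (\<Sum>ba\<in>?B. if ba = ?b then ?b y else 0)"
      by (rule sum.cong) auto
    also have "\<dots> = ?b y" using fB b by simp
    finally show "(\<Sum>ba\<in>?B. (if ba = ?b then 1 else 0) * ba y) = ?b y" .
  qed
  hence "\<exists>c. ?b = lcomb ?B c" by (intro exI) (rule sym)
  thus ?thesis unfolding QQ_def by simp
qed

lemma Q_dim: "has_dim (QQ S C1) (card (cosetS S ` C1))"
  unfolding has_dim_def
proof (intro exI conjI allI impI ballI)
  let ?B = "indc ` cosetS S ` C1"
  show fB: "finite ?B" by simp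
  show "card ?B = card (cosetS S ` C1)" using card_image[OF inj_on_subset[OF indc_inj subset_UNIV]] .
  show "?B \<subseteq> QQ S C1"
  proof
    fix b assume b: "b \<in> ?B"
    have "lcomb ?B (\<lambda>b'. if b' = b then 1 else 0) = b"
      unfolding lcomb_def
    proof (rule ext)
      fix x
      have "(\<Sum>ba\<in>?B. (if ba = b then 1 else 0) * ba x) = (\<Sum>ba\<in>?B. if ba = b then b x else 0)"
        by (rule sum.cong) auto
      also have "\<dots> = b x" using fB b by simp
      finally show "(\<Sum>ba\<in>?B. (if ba = b then 1 else 0) * ba x) = b x" .
    qed
    hence "\<exists>c. b = lcomb ?B c" by (intro exI) (rule sym)
    thus "b \<in> QQ S C1" unfolding QQ_def by simp
  qed
  show "QQ S C1 = {lcomb ?B c |c. True}" unfolding QQ_def ..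
next
  let ?B = "indc ` cosetS S ` C1"
  fix c b assume h: "lcomb ?B c = (\<lambda>_. 0)" and b: "b \<in> ?B"
  then obtain x0 where x0: "x0 \<in> C1" "b = indc (cosetS S x0)" by blast
  have ev: "b' x0 = (if b' = b then 1 else 0)" if b'B: "b' \<in> ?B" for b'
  proof -
    obtain x1 where x1: "x1 \<in> C1" "b' = indc (cosetS S x1)" using b'B by auto
    show ?thesis
    proof (cases "x0 \<in> cosetS S x1")
      case True
      hence "cosetS S x0 = cosetS S x1" by (rule coset_eq[OF S])
      thus ?thesis using x0 x1 True unfolding indc_def by simp
    next
      case False
      hence "b' \<noteq> b" using x0 x1 coset_mem[OF S, of x0] unfolding indc_def by (metis one_neq_zero)
      thus ?thesis using False x1 unfolding indc_def by simp
    qed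
  qed
  have "0 = lcomb ?B c x0" using h by simp
  also have "\<dots> = (\<Sum>b'\<in>?B. if b' = b then c b' else 0)"
    unfolding lcomb_def by (rule sum.cong[OF refl]) (simp add: ev)
  also have "\<dots> = c b" using b by simp
  finally show "c b = 0" by simp
qed

end

lemma not_dim1:
  assumes "has_dim V 1" "f \<in> V" "g \<in> V" "f x \<noteq> 0" "g x = 0" "g y \<noteq> (0::'k::field)"
  shows False
proof -
  obtain B where B: "card B = 1" "V = {lcomb B c | c. True}" using assms(1) unfolding has_dim_def by auto
  then obtain b0 where b0: "B = {b0}" by (meson card_1_singletonE)
  obtain cf cg where "f = lcomb B cf" "g = lcomb B cg" using assms(2,3) B(2) by blast
  hence f: "f z = cf b0 * b0 z" and g: "g z = cg b0 * b0 z" for z unfolding lcomb_def b0 by auto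
  have "b0 x \<noteq> 0" using assms(4) f by auto
  hence "cg b0 = 0" using assms(5) g by simp
  thus False using assms(6) g by simp
qed


lemma hw_le_err1: "hamming_wt a \<le> err_wt a (b :: 'n::finite \<Rightarrow> 'a::zero)"
  unfolding hamming_wt_def err_wt_def by (rule card_mono) auto

lemma hw_le_err2: "hamming_wt b \<le> err_wt (a :: 'n::finite \<Rightarrow> 'a::zero) b"
  unfolding hamming_wt_def err_wt_def by (rule card_mono) auto

lemma err_wt_0: "err_wt (\<lambda>_. 0) b = hamming_wt (b :: 'n::finite \<Rightarrow> 'a::zero)"
  unfolding hamming_wt_def err_wt_def by simp

lemma lin_code_wt: "lin_code C k d \<Longrightarrow> c \<in> C \<Longrightarrow> c \<noteq> (\<lambda>_. 0) \<Longrightarrow> d \<le> hamming_wt c"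
  unfolding lin_code_def by blast

context
  fixes p e s :: nat
  assumes pr: "prime p" and cardq: "card (UNIV :: 'a::{field,finite} set) = p ^ e" and e1: "1 \<le> e"
    and se: "s < e"
begin

abbreviation "r \<equiv> p ^ (e - s)"

lemma r_pos: "r > 0" using pr prime_gt_0_nat by simp

lemma sig_tau: "((z::'a) ^ r) ^ (p ^ s) = z"
proof -
  have ex: "p ^ (e - s) * p ^ s = p ^ e" using se by (simp add: power_add[symmetric])
  have "((z::'a) ^ r) ^ (p ^ s) = z ^ (p ^ e)"
    by (simp only: power_mult[symmetric] ex)
  thus ?thesis using pow_pe[OF pr cardq e1] by simp
qed

lemma tau_sig: "((z::'a) ^ (p ^ s)) ^ r = z"
proof -
  have ex: "p ^ s * p ^ (e - s) = p ^ e" using se by (simp add: power_add[symmetric])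
  have "((z::'a) ^ (p ^ s)) ^ r = z ^ (p ^ e)"
    by (simp only: power_mult[symmetric] ex)
  thus ?thesis using pow_pe[OF pr cardq e1] by simp
qed

lemma sig_inj: "(x::'a) ^ r = y ^ r \<Longrightarrow> x = y"
proof -
  assume h: "x ^ r = y ^ r"
  have "(x ^ r) ^ (p ^ s) = (y ^ r) ^ (p ^ s)" using h by simp
  thus ?thesis by (simp only: sig_tau)
qed

lemma sig_add: "((x::'a) + y) ^ r = x ^ r + y ^ r"
  by (rule frob_add[OF pr cardq e1])

lemma sig_zero_iff: "(x::'a) ^ r = 0 \<longleftrightarrow> x = 0"
  using r_pos by simp

lemma D_subsp:
  fixes C2 :: "('n::finite \<Rightarrow> 'a) set"
  assumes C2: "subsp C2"
  shows "subsp (code_pow C2 r)"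
  unfolding subsp_def code_pow_def
proof (intro conjI ballI allI)
  have "(\<lambda>_. (0::'a)) = (\<lambda>i. (\<lambda>_. 0::'a) i ^ r)" by (rule ext, rule sym, rule zero_power[OF r_pos])
  thus "(\<lambda>_. 0::'a) \<in> (\<lambda>c i. c i ^ r) ` C2" using subsp_zero[OF C2] by (rule image_eqI)
next
  fix x y assume "x \<in> (\<lambda>c i. c i ^ r) ` C2" "y \<in> (\<lambda>c i. c i ^ r) ` C2"
  then obtain x' y' where xy: "x' \<in> C2" "y' \<in> C2" "x = (\<lambda>i. x' i ^ r)" "y = (\<lambda>i. y' i ^ r)" by blast
  have "(\<lambda>i. x i + y i) = (\<lambda>i. (\<lambda>i. x' i + y' i) i ^ r)" using xy by (simp add: sig_add)
  thus "(\<lambda>i. x i + y i) \<in> (\<lambda>c i. c i ^ r) ` C2" using subsp_add[OF C2 xy(1,2)] by (rule image_eqI)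
next
  fix a x assume "x \<in> (\<lambda>c i. c i ^ r) ` C2"
  then obtain x' where xy: "x' \<in> C2" "x = (\<lambda>i. x' i ^ r)" by blast
  have "(\<lambda>i. a * x i) = (\<lambda>i. (\<lambda>i. a ^ (p ^ s) * x' i) i ^ r)"
    using xy by (simp add: power_mult_distrib tau_sig)
  thus "(\<lambda>i. a * x i) \<in> (\<lambda>c i. c i ^ r) ` C2" using subsp_scale[OF C2 xy(1)] by (rule image_eqI)
qed

lemma D_inj: "inj (\<lambda>(c::'n::finite \<Rightarrow> 'a) i. c i ^ r)"
proof (rule injI)
  fix x y :: "'n \<Rightarrow> 'a" assume h: "(\<lambda>i. x i ^ r) = (\<lambda>i. y i ^ r)"
  show "x = y"
  proof
    fix i show "x i = y i" using fun_cong[OF h, of i] by - (rule sig_inj, simp)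
  qed
qed

lemma D_card: "card (code_pow (C2 :: ('n::finite \<Rightarrow> 'a) set) r) = card C2"
  unfolding code_pow_def by (rule card_image) (rule inj_on_subset[OF D_inj subset_UNIV])

lemma D_wt: "hamming_wt (\<lambda>i. (c::'n::finite \<Rightarrow> 'a) i ^ r) = hamming_wt c"
  unfolding hamming_wt_def sig_zero_iff by (rule refl)

lemma galois_eq: "galois_dual p s (C2 :: ('n::finite \<Rightarrow> 'a) set) = euclid_dual (code_pow C2 r)"
proof -
  have key: "(\<Sum>i\<in>UNIV. c i * x i ^ (p ^ s)) = 0 \<longleftrightarrow> (\<Sum>i\<in>UNIV. c i ^ r * x i) = 0"
    for c x :: "'n \<Rightarrow> 'a"
  proof -
    have "(\<Sum>i\<in>UNIV. c i * x i ^ (p ^ s)) ^ r = (\<Sum>i\<in>UNIV. (c i * x i ^ (p ^ s)) ^ r)"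
      by (rule frob_sum[OF pr cardq e1])
    also have "\<dots> = (\<Sum>i\<in>UNIV. c i ^ r * x i)"
      by (simp add: power_mult_distrib tau_sig)
    finally have fin: "(\<Sum>i\<in>UNIV. c i * x i ^ (p ^ s)) ^ r = (\<Sum>i\<in>UNIV. c i ^ r * x i)" .
    show ?thesis by (subst fin[symmetric]) (rule sig_zero_iff[symmetric])
  qed
  show ?thesis unfolding galois_dual_def galois_form_def euclid_dual_def code_pow_def
    using key by auto
qed

end

theorem corollary2p3:
  fixes C1 C2 :: "('n::finite \<Rightarrow> 'a::{field,finite}) set"
    and p e s k1 k2 d1 d2 :: nat
  assumes "prime p" and "card (UNIV :: 'a set) = p ^ e" and "1 \<le> e" and "s < e"
    and "lin_code C1 k1 d1" and "lin_code C2 k2 d2"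
    and "galois_dual p s C2 \<subseteq> C1"
    and "(C1 - euclid_dual (code_pow C2 (p ^ (e - s)))) \<union>
         (code_pow C2 (p ^ (e - s)) - euclid_dual C1) \<noteq> {}"
  shows "\<exists>Q :: (('n \<Rightarrow> 'a) \<Rightarrow> complex) set. quantum_code p e Q (k1 + k2 - card (UNIV :: 'n set))
              (Min (hamming_wt ` ((C1 - euclid_dual (code_pow C2 (p ^ (e - s)))) \<union>
                                   (code_pow C2 (p ^ (e - s)) - euclid_dual C1))))
           \<and> Min (hamming_wt ` ((C1 - euclid_dual (code_pow C2 (p ^ (e - s)))) \<union>
                                   (code_pow C2 (p ^ (e - s)) - euclid_dual C1))) \<ge> min d1 d2
           \<and> pure_to p e Q (min d1 d2)"
proof -
  note pr = assms(1) and cardq = assms(2) and e1 = assms(3) and se = assms(4)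
  define D where "D = code_pow C2 (p ^ (e - s))"
  define S where "S = euclid_dual D"
  define U where "U = (C1 - S) \<union> (D - euclid_dual C1)"
  define m where "m = Min (hamming_wt ` U)"
  define K where "K = cosetS S ` C1"
  define Q where "Q = QQ S C1"
  define q where "q = card (UNIV :: 'a set)"
  define n where "n = card (UNIV :: 'n set)"
  have hd1: "has_dim C1 k1" and hd2: "has_dim C2 k2" using assms(5,6) unfolding lin_code_def by auto
  have C1s: "subsp C1" and C2s: "subsp C2" using has_dim_subsp hd1 hd2 by auto
  have Ds: "subsp D" unfolding D_def by (rule D_subsp[OF pr cardq e1 se C2s])
  have Ss: "subsp S" unfolding S_def by (rule subsp_dual)
  have SC: "S \<subseteq> C1" using assms(7) galois_eq[OF pr cardq e1 se, of C2] unfolding S_def D_def by simp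
  have q2: "q \<ge> 2"
  proof -
    have "p ^ e \<ge> p ^ 1" using e1 prime_gt_1_nat[OF pr] by (intro power_increasing) auto
    thus ?thesis using cardq prime_ge_2_nat[OF pr] unfolding q_def by simp
  qed
  have cC1: "card C1 = q ^ k1" unfolding q_def by (rule has_dim_card[OF hd1])
  have cD: "card D = q ^ k2" unfolding q_def D_def D_card[OF pr cardq e1 se] by (rule has_dim_card[OF hd2])
  have cDS: "card D * card S = q ^ n" unfolding S_def q_def n_def by (rule card_dual[OF pr cardq e1 Ds])
  have cSS: "card S * card (euclid_dual S) = q ^ n" unfolding q_def n_def by (rule card_dual[OF pr cardq e1 Ss])
  have cK: "card S * card K = q ^ k1" unfolding K_def using coset_count[OF Ss C1s SC] cC1 by simp
  have DSS: "euclid_dual S = D"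
  proof -
    have sub: "D \<subseteq> euclid_dual S" unfolding S_def euclid_dual_dotp by (auto simp: dotp_comm)
    have Spos: "card S > 0"
    proof (rule ccontr)
      assume "\<not> card S > 0"
      hence "card S = 0" by simp
      hence "q ^ n = 0" using cDS by simp
      thus False using q2 by simp
    qed
    have "card S * card (euclid_dual S) = card S * card D" using cDS cSS by (simp add: mult.commute)
    hence "card (euclid_dual S) = card D" using Spos by (cases "S = {}") simp_all
    hence "D = euclid_dual S" by (intro card_subset_eq[OF _ sub]) simp_all
    thus ?thesis by simp
  qed
  have Kpos: "card K > 0" unfolding K_def using subsp_zero[OF C1s] by (auto simp: card_gt_0_iff)
  have qK: "q ^ n * card K = q ^ (k1 + k2)"
  proof -
    have "q ^ n * card K = card D * (card S * card K)" using cDS by (simp add: mult.assoc)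
    also have "\<dots> = q ^ k2 * q ^ k1" using cD cK by simp
    finally show ?thesis by (simp add: power_add mult.commute)
  qed
  have nle: "n \<le> k1 + k2"
  proof -
    have "q ^ n \<le> q ^ n * card K" using Kpos by simp
    hence le: "q ^ n \<le> q ^ (k1 + k2)" using qK by simp
    from q2 have "1 < q" by simp
    from power_le_imp_le_exp[OF this le] show ?thesis .
  qed
  have cKq: "card K = q ^ (k1 + k2 - n)"
  proof -
    have "q ^ n * card K = q ^ n * q ^ (k1 + k2 - n)"
      using qK nle by (simp add: power_add[symmetric])
    thus ?thesis using q2 by simp
  qed
  have hQ: "has_dim Q (q ^ (k1 + k2 - n))" unfolding Q_def cKq[symmetric] K_def by (rule Q_dim[OF Ss C1s SC])
  have supp: "u \<in> Q \<Longrightarrow> y \<notin> C1 \<Longrightarrow> u y = 0" for u y unfolding Q_def by (rule Q_supp[OF Ss C1s SC])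
  have shift: "u \<in> Q \<Longrightarrow> s' \<in> S \<Longrightarrow> u (\<lambda>i. y i + s' i) = u y" for u y s' unfolding Q_def by (rule Q_shift[OF Ss C1s SC])
  have zero: "qinner u (err_apply p e c a b v) = 0"
    if uv: "u \<in> Q" "v \<in> Q" and ab: "a \<notin> C1 \<or> b \<notin> D" for u v c a b
  proof -
    have "(\<Sum>x\<in>UNIV. cnj (u (\<lambda>i. x i + a i)) * chi p e (dotp b x) * v x) = 0"
    proof (cases "a \<in> C1")
      case False
      show ?thesis by (rule Z1[OF pr cardq e1 C1s False]) (use supp uv in auto)
    next
      case True
      hence "b \<notin> euclid_dual S" using ab DSS by simp
      then obtain s0 where "s0 \<in> S" "dotp s0 b \<noteq> 0" unfolding euclid_dual_dotp by blast
      thus ?thesis by (intro Z2[OF pr cardq e1 Ss]) (use shift uv in auto)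
    qed
    thus ?thesis by (simp add: err_formula[OF pr cardq e1])
  qed
  have Ufin: "finite U" by simp
  have Une: "U \<noteq> {}" using assms(8) unfolding U_def S_def D_def .
  have Uwt: "min d1 d2 \<le> hamming_wt w" if w: "w \<in> U" for w
  proof (cases "w \<in> C1 - S")
    case True
    hence "w \<noteq> (\<lambda>_. 0)" using subsp_zero[OF Ss] by auto
    hence "d1 \<le> hamming_wt w" using lin_code_wt[OF assms(5), of w] True by blast
    thus ?thesis by simp
  next
    case False
    hence wD: "w \<in> D - euclid_dual C1" using w unfolding U_def by blast
    then obtain c where c: "c \<in> C2" "w = (\<lambda>i. c i ^ (p ^ (e - s)))" unfolding D_def code_pow_def by blast
    have "w \<noteq> (\<lambda>_. 0)" using wD subsp_zero[OF subsp_dual[of C1]] by auto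
    hence "c \<noteq> (\<lambda>_. 0)" using c pr prime_gt_0_nat by auto
    hence "d2 \<le> hamming_wt c" using lin_code_wt[OF assms(6)] c(1) by blast
    moreover have "hamming_wt w = hamming_wt c" unfolding c(2) by (rule D_wt[OF pr cardq e1 se])
    ultimately show ?thesis by simp
  qed
  have mge: "min d1 d2 \<le> m" unfolding m_def using Ufin Une Uwt by (simp add: Min_ge_iff)
  have mle: "m \<le> hamming_wt w" if "w \<in> U" for w unfolding m_def using Ufin that by simp
  have pure: "pure_to p e Q (min d1 d2)"
    unfolding pure_to_def
  proof (intro ballI allI impI)
    fix u v c and a b :: "'n \<Rightarrow> 'a" assume uv: "u \<in> Q" "v \<in> Q" and w1: "1 \<le> err_wt a b" and wlt: "err_wt a b < min d1 d2"
    show "qinner u (err_apply p e c a b v) = 0"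
    proof (cases "a \<in> C1 \<and> b \<in> D")
      case False thus ?thesis using zero uv by blast
    next
      case True
      have a0: "a = (\<lambda>_. 0)"
      proof (rule ccontr)
        assume "a \<noteq> (\<lambda>_. 0)"
        hence "d1 \<le> hamming_wt a" using lin_code_wt[OF assms(5)] True by blast
        thus False using hw_le_err1[of a b] wlt by simp
      qed
      hence "1 \<le> hamming_wt b" using w1 err_wt_0[of b] by simp
      hence b0: "b \<noteq> (\<lambda>_. 0)" unfolding hamming_wt_def by auto
      obtain c' where c: "c' \<in> C2" "b = (\<lambda>i. c' i ^ (p ^ (e - s)))" using True unfolding D_def code_pow_def by blast
      hence "c' \<noteq> (\<lambda>_. 0)" using b0 pr prime_gt_0_nat by auto
      hence "d2 \<le> hamming_wt c'" using lin_code_wt[OF assms(6)] c(1) by blast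
      moreover have "hamming_wt b = hamming_wt c'" unfolding c(2) by (rule D_wt[OF pr cardq e1 se])
      ultimately have "d2 \<le> hamming_wt b" by simp
      thus ?thesis using hw_le_err2[of b a] wlt by simp
    qed
  qed
  have md1: "qinner u (err_apply p e c a b v) = 0"
    if uv: "u \<in> Q" "v \<in> Q" "qinner u v = 0" and wlt: "err_wt a b < m" for u v c and a b :: "'n \<Rightarrow> 'a"
  proof (cases "a \<in> C1 \<and> b \<in> D")
    case False thus ?thesis using zero uv by blast
  next
    case True
    have aS: "a \<in> S"
    proof (rule ccontr)
      assume "a \<notin> S" hence "a \<in> U" using True unfolding U_def by blast
      from mle[OF this] hw_le_err1[of a b] wlt show False by simp
    qed
    have bS: "b \<in> euclid_dual C1"
    proof (rule ccontr)
      assume "b \<notin> euclid_dual C1" hence "b \<in> U" using True unfolding U_def by blast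
      from mle[OF this] hw_le_err2[of b a] wlt show False by simp
    qed
    have "(\<Sum>x\<in>UNIV. cnj (u (\<lambda>i. x i + a i)) * chi p e (dotp b x) * v x) = qinner u v"
      by (rule Z3[OF pr cardq e1 aS bS]) (use supp shift uv in auto)
    thus ?thesis using uv(3) by (simp add: err_formula[OF pr cardq e1])
  qed
  obtain x1 where x1: "x1 \<in> C1" "x1 \<notin> S"
  proof -
    obtain w where w: "w \<in> U" using Une by blast
    show ?thesis
    proof (cases "w \<in> C1 - S")
      case True thus ?thesis using that by blast
    next
      case False
      hence wD: "w \<in> D" "w \<notin> euclid_dual C1" using w unfolding U_def by auto
      then obtain c where c: "c \<in> C1" "dotp c w \<noteq> 0" unfolding euclid_dual_dotp by blast
      have "c \<notin> S" using wD(1) c(2) unfolding S_def euclid_dual_dotp by (auto simp: dotp_comm)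
      thus ?thesis using that c(1) by blast
    qed
  qed
  have not1: "\<not> has_dim Q 1"
  proof
    assume h: "has_dim Q 1"
    let ?f = "indc (cosetS S (\<lambda>_. 0))" and ?g = "indc (cosetS S x1)"
    have fQ: "?f \<in> Q" unfolding Q_def by (rule Q_ind[OF Ss C1s SC subsp_zero[OF C1s]])
    have gQ: "?g \<in> Q" unfolding Q_def by (rule Q_ind[OF Ss C1s SC x1(1)])
    have "?f (\<lambda>_. 0) \<noteq> 0" using coset_mem[OF Ss] unfolding indc_def by simp
    moreover have "?g (\<lambda>_. 0) = 0"
    proof -
      have "(\<lambda>_. 0) \<notin> cosetS S x1"
      proof
        assume "(\<lambda>_. 0) \<in> cosetS S x1"
        hence "(\<lambda>i. 0 - x1 i) \<in> S" unfolding cosetS_def by simp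
        hence "(\<lambda>i. (-1) * (0 - x1 i)) \<in> S" using subsp_scale[OF Ss] by blast
        thus False using x1(2) by simp
      qed
      thus ?thesis unfolding indc_def by simp
    qed
    moreover have "?g x1 \<noteq> 0" using coset_mem[OF Ss] unfolding indc_def by simp
    ultimately show False using not_dim1[OF h fQ gQ] by blast
  qed
  have md: "qmin_dist p e Q m"
    unfolding qmin_dist_def using md1 not1 by blast
  have "quantum_code p e Q (k1 + k2 - n) m"
    unfolding quantum_code_def using hQ md unfolding q_def by simp
  thus ?thesis using mge pure unfolding m_def U_def S_def D_def n_def by blast
qed

end
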